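(* Let $s\ge1$. If $f\in C^2(\mathbb{R}^s)$ and $H_n(f)<\infty$ for some $n\in\mathbb{N}_0$, then for any $n_0\in\mathbb{N}_0$ there exists a constant $C>0$ depending only on $n_0$ and $f$ such that $$\sum_{\alpha\in\mathbb{Z}^s}\left|\,\left|\hat{\boldsymbol d}_\alpha^n(f)\right|_2-2^{-ns}\left|\nabla f(x_\alpha^n)\right|_2\right|\le 2^{-n}C\int_{\mathbb{R}^s}\left|D^2f(x)\right|_F\,dx\qquad\text{for all }n\ge n_0.$$
   Context: Univariate Haar functions: $\psi_0:=\chi_{[0,1]}$, $\psi_1:=\chi_{[0,\frac12]}-\chi_{[\frac12,1]}$; for $\theta\in\{0,1\}^s$, $\psi_\theta(x):=\prod_{j=1}^s\psi_{\theta_j}(x_j)$, and $d_{\theta,\alpha}^n(f):=2^{ns/2}\int_{\mathbb{R}^s}f(t)\psi_\theta(2^nt-\alpha)\,dt$ for $n\in\mathbb{N}_0$, $\alpha\in\mathbb{Z}^s$. Let $\epsilon_j$ denote the $j$-th unit vector of $\mathbb{R}^s$, $x_\alpha^n:=2^{-n}(\alpha+\frac12(1,\dots,1))$, and $\hat{\boldsymbol d}_\alpha^n(f):=-2^{n(1-s/2)+2}\big(d^n_{\epsilon_1,\alpha}(f),\dots,d^n_{\epsilon_s,\alpha}(f)\big)\in\mathbb{R}^s$. $|\cdot|_2$ is the Euclidean norm. $|D^2f(x)|_F:=\big(\sum_{j,k=1}^s(\partial^2f(x)/\partial x_j\partial x_k)^2\big)^{1/2}$, and $H_n(f):=\sum_{\alpha\in\mathbb{Z}^s}2^{-ns}\max_{x\in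 x_\alpha^n+2^{-n}[-\frac12,\frac12]^s}|D^2f(x)|_F$ (possibly $+\infty$). *)

theory Defs
  imports "HOL-Analysis.Analysis"
begin

text \<open>Dimension s = CARD('n); points of R^s are vectors of type real^'n.
  Multi-indices alpha in Z^s are functions 'n => int.\<close>

definition ivec :: "('n::finite \<Rightarrow> int) \<Rightarrow> real^'n" where
  "ivec \<alpha> = (\<chi> j. of_int (\<alpha> j))"

definition partial :: "'n::finite \<Rightarrow> (real^'n \<Rightarrow> real) \<Rightarrow> real^'n \<Rightarrow> real" where
  "partial j f x = deriv (\<lambda>t. f (x + t *\<^sub>R axis j 1)) 0"

definition C2 :: "(real^'n::finite \<Rightarrow> real) \<Rightarrow> bool" where
  "C2 f \<longleftrightarrow> continuous_on UNIV f
     \<and> (\<forall>j x. (\<lambda>t. f (x + t *\<^sub>R axis j 1)) differentiable (at 0))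
     \<and> (\<forall>j. continuous_on UNIV (partial j f))
     \<and> (\<forall>j k x. (\<lambda>t. partial j f (x + t *\<^sub>R axis k 1)) differentiable (at 0))
     \<and> (\<forall>j k. continuous_on UNIV (partial k (partial j f)))"

definition grad :: "(real^'n::finite \<Rightarrow> real) \<Rightarrow> real^'n \<Rightarrow> real^'n" where
  "grad f x = (\<chi> j. partial j f x)"

definition hess_frob :: "(real^'n::finite \<Rightarrow> real) \<Rightarrow> real^'n \<Rightarrow> real" where
  "hess_frob f x = sqrt (\<Sum>j\<in>UNIV. \<Sum>k\<in>UNIV. (partial k (partial j f) x)^2)"

text \<open>Univariate Haar functions; False ~ 0, True ~ 1.\<close>
definition psi1 :: "bool \<Rightarrow> real \<Rightarrow> real" where
  "psi1 b t = (if \<not> b then indicator {0..1} t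
               else indicator {0..1/2} t - indicator {1/2..1} t)"

definition psi :: "('n::finite \<Rightarrow> bool) \<Rightarrow> real^'n \<Rightarrow> real" where
  "psi \<theta> x = (\<Prod>j\<in>UNIV. psi1 (\<theta> j) (x $ j))"

definition haar_coeff :: "('n::finite \<Rightarrow> bool) \<Rightarrow> nat \<Rightarrow> ('n \<Rightarrow> int) \<Rightarrow> (real^'n \<Rightarrow> real) \<Rightarrow> real" where
  "haar_coeff \<theta> n \<alpha> f =
     2 powr (real n * real CARD('n) / 2) *
     integral UNIV (\<lambda>t. f t * psi \<theta> ((2::real)^n *\<^sub>R t - ivec \<alpha>))"

definition unitb :: "'n::finite \<Rightarrow> 'n \<Rightarrow> bool" where
  "unitb j = (\<lambda>i. i = j)"

definition dhat :: "nat \<Rightarrow> ('n::finite \<Rightarrow> int) \<Rightarrow> (real^'n \<Rightarrow> real) \<Rightarrow> real^'n" where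
  "dhat n \<alpha> f = (\<chi> j. - (2 powr (real n * (1 - real CARD('n) / 2) + 2)) * haar_coeff (unitb j) n \<alpha> f)"

definition xpt :: "nat \<Rightarrow> ('n::finite \<Rightarrow> int) \<Rightarrow> real^'n" where
  "xpt n \<alpha> = (2 powr (- real n)) *\<^sub>R (ivec \<alpha> + (\<chi> j. 1/2))"

definition cube :: "nat \<Rightarrow> ('n::finite \<Rightarrow> int) \<Rightarrow> (real^'n) set" where
  "cube n \<alpha> = cbox (xpt n \<alpha> - (\<chi> j. 2 powr (- real n) / 2)) (xpt n \<alpha> + (\<chi> j. 2 powr (- real n) / 2))"

definition Hn :: "nat \<Rightarrow> (real^'n::finite \<Rightarrow> real) \<Rightarrow> ennreal" where
  "Hn n f = (\<Sum>\<^sub>\<infinity>\<alpha>\<in>(UNIV :: ('n \<Rightarrow> int) set).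
      ennreal (2 powr (- real n * real CARD('n))) * (SUP x\<in>cube n \<alpha>. ennreal (hess_frob f x)))"

end

theory Submission
  imports Defs
begin


lemma partial_hasderiv:
  assumes "\<forall>x. (\<lambda>t. g (x + t *\<^sub>R axis j 1)) differentiable (at 0)"
  shows "((\<lambda>r. g (x + r *\<^sub>R axis j (1::real))) has_real_derivative partial j g (x + r *\<^sub>R axis j 1)) (at r)"
proof -
  let ?y = "x + r *\<^sub>R axis j (1::real)"
  have "(\<lambda>t. g (?y + t *\<^sub>R axis j 1)) differentiable (at 0)" using assms by blast
  hence "((\<lambda>t. g (?y + t *\<^sub>R axis j 1)) has_real_derivative partial j g ?y) (at 0)"
    unfolding partial_def by (simp add: DERIV_deriv_iff_real_differentiable)
  moreover have "(\<lambda>t. g (?y + t *\<^sub>R axis j 1)) = (\<lambda>t. g (x + (t + r) *\<^sub>R axis j 1))"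
    by (simp add: algebra_simps scaleR_add_left)
  ultimately show ?thesis using DERIV_shift[of "\<lambda>r. g (x + r *\<^sub>R axis j 1)" _ 0 r] by simp
qed

lemma coord_mvt:
  assumes "\<forall>x. (\<lambda>t. g (x + t *\<^sub>R axis j 1)) differentiable (at 0)"
  shows "\<exists>z. min 0 d \<le> z \<and> z \<le> max 0 d \<and>
     g (x + d *\<^sub>R axis j 1) - g x = d * partial j g (x + z *\<^sub>R axis j (1::real))"
proof -
  have D: "\<And>r. ((\<lambda>r. g (x + r *\<^sub>R axis j (1::real))) has_real_derivative partial j g (x + r *\<^sub>R axis j 1)) (at r)"
    using partial_hasderiv[OF assms] by blast
  consider "d > 0" | "d < 0" | "d = 0" by linarith
  then show ?thesis
  proof cases
    case 1
    from MVT2[OF 1, of "\<lambda>r. g (x + r *\<^sub>R axis j 1)" "\<lambda>r. partial j g (x + r *\<^sub>R axis j 1)"] D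
    obtain z where "0 < z" "z < d" "g (x + d *\<^sub>R axis j 1) - g (x + 0 *\<^sub>R axis j 1) = (d - 0) * partial j g (x + z *\<^sub>R axis j 1)"
      by blast
    then show ?thesis using 1 by (intro exI[of _ z]) auto
  next
    case 2
    from MVT2[OF 2, of "\<lambda>r. g (x + r *\<^sub>R axis j 1)" "\<lambda>r. partial j g (x + r *\<^sub>R axis j 1)"] D
    obtain z where "d < z" "z < 0" "g (x + 0 *\<^sub>R axis j 1) - g (x + d *\<^sub>R axis j 1) = (0 - d) * partial j g (x + z *\<^sub>R axis j 1)"
      by blast
    then show ?thesis using 2 by (intro exI[of _ z]) (auto simp: algebra_simps)
  next
    case 3
    then show ?thesis by (intro exI[of _ 0]) auto
  qed
qed

lemma stair:
  fixes g :: "real^'n::finite \<Rightarrow> real"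
  assumes D: "\<forall>k x. (\<lambda>t. g (x + t *\<^sub>R axis k 1)) differentiable (at 0)"
    and Bd: "\<forall>k. \<forall>y\<in>cbox a b. \<bar>partial k g y\<bar> \<le> B"
    and x: "x \<in> cbox a b" and y: "y \<in> cbox a b"
  shows "\<bar>g y - g x\<bar> \<le> B * (\<Sum>k\<in>UNIV. \<bar>y$k - x$k\<bar>)"
proof -
  define z where "z S = (\<chi> i. if i \<in> S then y$i else x$i)" for S
  have zin: "z S \<in> cbox a b" for S using x y unfolding z_def mem_box_cart by auto
  have "finite S \<Longrightarrow> \<bar>g (z S) - g x\<bar> \<le> B * (\<Sum>k\<in>S. \<bar>y$k - x$k\<bar>)" for S
  proof (induction S rule: finite_induct)
    case empty
    have "z {} = x" unfolding z_def by (simp add: vec_eq_iff)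
    then show ?case by simp
  next
    case (insert k S)
    have zi: "z (insert k S) = z S + (y$k - x$k) *\<^sub>R axis k 1"
      using insert(2) unfolding z_def by (auto simp: vec_eq_iff axis_def)
    obtain r where r: "min 0 (y$k - x$k) \<le> r" "r \<le> max 0 (y$k - x$k)"
      "g (z S + (y$k - x$k) *\<^sub>R axis k 1) - g (z S) = (y$k - x$k) * partial k g (z S + r *\<^sub>R axis k 1)"
      using coord_mvt[of g k "y$k - x$k" "z S"] D by blast
    have "z S + r *\<^sub>R axis k 1 \<in> cbox a b"
      using x y r insert(2) unfolding z_def mem_box_cart
      by (auto simp: axis_def) (smt (verit))+
    hence pb: "\<bar>partial k g (z S + r *\<^sub>R axis k 1)\<bar> \<le> B" using Bd by blast
    have "\<bar>g (z (insert k S)) - g (z S)\<bar> \<le> \<bar>y$k - x$k\<bar> * B"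
      using zi r(3) pb by (simp add: abs_mult mult_left_mono)
    then show ?case using insert by (simp add: algebra_simps) 
  qed
  from this[of UNIV] have "\<bar>g (z UNIV) - g x\<bar> \<le> B * (\<Sum>k\<in>UNIV. \<bar>y$k - x$k\<bar>)" by simp
  moreover have "z UNIV = y" unfolding z_def by (simp add: vec_eq_iff)
  ultimately show ?thesis by simp
qed

lemma second_le_hess: "\<bar>partial k (partial j f) x\<bar> \<le> hess_frob f x"
proof -
  have "(partial k (partial j f) x)^2 \<le> (\<Sum>k\<in>UNIV. (partial k (partial j f) x)^2)"
    by (rule member_le_sum) auto
  also have "\<dots> \<le> (\<Sum>j\<in>UNIV. \<Sum>k\<in>UNIV. (partial k (partial j f) x)^2)"
    by (rule member_le_sum[of _ _ "\<lambda>j. \<Sum>k\<in>UNIV. (partial k (partial j f) x)^2"]) (auto intro: sum_nonneg)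
  finally show ?thesis unfolding hess_frob_def by (simp add: real_le_rsqrt)
qed



lemma psi_unit:
  fixes y :: "real^'n::finite"
  shows "psi (unitb j) y =
    (if (\<forall>i. 0 \<le> y$i \<and> y$i \<le> (if i = j then 1/2 else 1)) then 1 else 0)
  - (if (\<forall>i. (if i = j then 1/2 else 0) \<le> y$i \<and> y$i \<le> 1) then 1 else 0)"
proof -
  have pr: "psi (unitb j) y = psi1 True (y$j) * (\<Prod>i\<in>UNIV-{j}. psi1 False (y$i))"
    unfolding psi_def unitb_def
    by (subst prod.remove[of UNIV j]) (auto intro!: prod.cong)
  show ?thesis
  proof (cases "\<forall>i. i \<noteq> j \<longrightarrow> 0 \<le> y$i \<and> y$i \<le> 1")
    case True
    have "(\<Prod>i\<in>UNIV-{j}. psi1 False (y$i)) = 1"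
      using True by (intro prod.neutral) (auto simp: psi1_def indicator_def)
    moreover have "(\<forall>i. 0 \<le> y$i \<and> y$i \<le> (if i = j then 1/2 else 1)) \<longleftrightarrow> 0 \<le> y$j \<and> y$j \<le> 1/2"
      using True by (metis order_refl)
    moreover have "(\<forall>i. (if i = j then 1/2 else 0) \<le> y$i \<and> y$i \<le> 1) \<longleftrightarrow> 1/2 \<le> y$j \<and> y$j \<le> 1"
      using True by (metis order_refl)
    ultimately show ?thesis using pr by (simp add: psi1_def indicator_def)
  next
    case False
    then obtain i where i: "i \<noteq> j" "\<not> (0 \<le> y$i \<and> y$i \<le> 1)" by blast
    have P0: "(\<Prod>i\<in>UNIV-{j}. psi1 False (y$i)) = 0"
      using i by (intro prod_zero[of _ _ ]) (auto simp: psi1_def indicator_def intro!: bexI[of _ i])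
    have n1: "\<not> (\<forall>i. 0 \<le> y$i \<and> y$i \<le> (if i = j then 1/2 else 1))"
      using i by (metis (full_types))
    have n2: "\<not>(\<forall>i. (if i = j then 1/2 else 0) \<le> y$i \<and> y$i \<le> 1)"
      using i by (metis (full_types))
    show ?thesis unfolding pr P0 by (simp only: if_not_P[OF n1] if_not_P[OF n2])
  qed
qed

lemma h_eq: "(2::real) powr - real n = 1 / 2^n"
  by (simp add: powr_minus powr_realpow divide_inverse)

lemma cube_eq: "cube n \<alpha> = cbox ((2 powr - real n) *\<^sub>R ivec \<alpha>) ((2 powr - real n) *\<^sub>R ivec \<alpha> + (2 powr - real n) *\<^sub>R (\<chi> i. 1))"
  unfolding cube_def xpt_def by (rule arg_cong2[where f=cbox]; simp add: vec_eq_iff algebra_simps)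

lemma psi_shift:
  fixes t :: "real^'n::finite" and n :: nat
  defines "h \<equiv> (2::real) powr - real n"
  shows "psi (unitb j) ((2::real)^n *\<^sub>R t - ivec \<alpha>) =
    indicator (cbox (h *\<^sub>R ivec \<alpha>) (h *\<^sub>R ivec \<alpha> + h *\<^sub>R (\<chi> i. if i = j then 1/2 else 1))) t
  - indicator (cbox (h *\<^sub>R ivec \<alpha> + (h/2) *\<^sub>R axis j 1) (h *\<^sub>R ivec \<alpha> + h *\<^sub>R (\<chi> i. 1))) t"
proof -
  have hN: "h = 1 / 2^n" unfolding h_def by (rule h_eq)
  have co: "\<And>i. ((2::real)^n *\<^sub>R t - ivec \<alpha>)$i = 2^n * t$i - of_int (\<alpha> i)"
    by (simp add: ivec_def)
  have e: "\<And>c a x::real. (0 \<le> 2^n * x - a \<and> 2^n * x - a \<le> c) \<longleftrightarrow> (h * a \<le> x \<and> x \<le> h * a + h * c)"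
    unfolding hN by (simp add: field_simps)
  have e2: "\<And>c a x::real. (c \<le> 2^n * x - a \<and> 2^n * x - a \<le> 1) \<longleftrightarrow> (h * a + h * c \<le> x \<and> x \<le> h * a + h * 1)"
    unfolding hN by (simp add: field_simps)
  have 1: "(\<forall>i. 0 \<le> ((2::real)^n *\<^sub>R t - ivec \<alpha>)$i \<and> ((2::real)^n *\<^sub>R t - ivec \<alpha>)$i \<le> (if i = j then 1/2 else 1))
     \<longleftrightarrow> t \<in> cbox (h *\<^sub>R ivec \<alpha>) (h *\<^sub>R ivec \<alpha> + h *\<^sub>R (\<chi> i. if i = j then 1/2 else 1))"
    unfolding mem_box_cart co e by (simp add: ivec_def)
  have ax: "\<And>i. (h *\<^sub>R ivec \<alpha> + (h/2) *\<^sub>R axis j 1)$i = h * of_int (\<alpha> i) + h * (if i = j then 1/2 else 0)"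
    by (simp add: ivec_def axis_def)
  have 2: "(\<forall>i. (if i = j then 1/2 else 0) \<le> ((2::real)^n *\<^sub>R t - ivec \<alpha>)$i \<and> ((2::real)^n *\<^sub>R t - ivec \<alpha>)$i \<le> 1)
     \<longleftrightarrow> t \<in> cbox (h *\<^sub>R ivec \<alpha> + (h/2) *\<^sub>R axis j 1) (h *\<^sub>R ivec \<alpha> + h *\<^sub>R (\<chi> i. 1))"
    unfolding mem_box_cart co e2 ax by (simp add: ivec_def)
  show ?thesis unfolding psi_unit 1 2 indicator_def by simp
qed



lemma haar_int:
  fixes f :: "real^'n::finite \<Rightarrow> real" and n :: nat
    and j :: "'n" and \<alpha> :: "'n \<Rightarrow> int"
  assumes cf: "continuous_on UNIV f"
  defines "h \<equiv> (2::real) powr - real n"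
  defines "A \<equiv> cbox (h *\<^sub>R ivec \<alpha>) (h *\<^sub>R ivec \<alpha> + h *\<^sub>R (\<chi> i. if i = j then 1/2 else 1))"
  shows "integral UNIV (\<lambda>t. f t * psi (unitb j) ((2::real)^n *\<^sub>R t - ivec \<alpha>))
       = integral A (\<lambda>t. f t - f (t + (h/2) *\<^sub>R axis j 1))"
proof -
  define lb where "lb = h *\<^sub>R ivec \<alpha> + (h/2) *\<^sub>R axis j (1::real)"
  define ub where "ub = h *\<^sub>R ivec \<alpha> + h *\<^sub>R (\<chi> i. (1::real))"
  define B where "B = cbox lb ub"
  define c where "c = (h/2) *\<^sub>R axis j (1::real)"
  have eq: "(\<lambda>t. f t * psi (unitb j) ((2::real)^n *\<^sub>R t - ivec \<alpha>)) =
      (\<lambda>t. (if t \<in> A then f t else 0) - (if t \<in> B then f t else 0))"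
    using psi_shift[where n=n and j=j and \<alpha>=\<alpha>] unfolding h_def A_def B_def lb_def ub_def
    by (auto simp: indicator_def fun_eq_iff)
  have iA: "f integrable_on A" unfolding A_def
    by (rule integrable_continuous) (rule continuous_on_subset[OF cf], simp)
  have iB: "f integrable_on B" unfolding B_def
    by (rule integrable_continuous) (rule continuous_on_subset[OF cf], simp)
  have "integral UNIV (\<lambda>t. f t * psi (unitb j) ((2::real)^n *\<^sub>R t - ivec \<alpha>))
      = integral A f - integral B f"
    unfolding eq
    by (subst integral_diff) (use iA iB in \<open>simp_all add: integrable_restrict_UNIV integral_restrict_UNIV\<close>)
  moreover have "((\<lambda>x. f (x + c)) has_integral integral B f) A"
  proof -
    have "(f has_integral integral B f) (cbox lb ub)" using iB unfolding B_def by (simp add: has_integral_integral)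
    hence "((\<lambda>x. f (1 *\<^sub>R x + c)) has_integral integral B f /\<^sub>R 1 ^ DIM(real^'n)) (cbox ((lb - c) /\<^sub>R 1) ((ub - c) /\<^sub>R 1))"
      using has_integral_affinity_iff[where m=1 and f=f and I="integral B f" and c=c and a=lb and b=ub] by simp
    moreover have "cbox ((lb - c) /\<^sub>R 1) ((ub - c) /\<^sub>R 1) = A"
      unfolding A_def lb_def ub_def c_def
      by (rule arg_cong2[where f=cbox]; simp add: vec_eq_iff axis_def)
    ultimately show ?thesis by simp
  qed
  ultimately show ?thesis
  proof -
    assume e1: "integral UNIV (\<lambda>t. f t * psi (unitb j) ((2::real)^n *\<^sub>R t - ivec \<alpha>)) = integral A f - integral B f"
      and e2: "((\<lambda>x. f (x + c)) has_integral integral B f) A"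
    have i2: "(\<lambda>x. f (x + c)) integrable_on A" using e2 by (rule has_integral_integrable)
    have e3: "integral A (\<lambda>x. f (x + c)) = integral B f" using e2 by (rule integral_unique)
    have "integral A (\<lambda>t. f t - f (t + c)) = integral A f - integral A (\<lambda>x. f (x + c))"
      by (rule integral_diff[OF iA i2])
    then show ?thesis using e1 e3 unfolding c_def by simp
  qed
qed



lemma C2D:
  assumes "C2 f"
  shows "continuous_on UNIV f" "\<forall>j x. (\<lambda>t. f (x + t *\<^sub>R axis j 1)) differentiable (at 0)"
    "\<And>j. continuous_on UNIV (partial j f)"
    "\<And>j. \<forall>k x. (\<lambda>t. partial j f (x + t *\<^sub>R axis k 1)) differentiable (at 0)"
    "\<And>j k. continuous_on UNIV (partial k (partial j f))"
  using assms unfolding C2_def by blast+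

lemma hess_nonneg: "0 \<le> hess_frob f x"
  unfolding hess_frob_def by (auto intro!: sum_nonneg)

lemma cube_err:
  fixes f :: "real^'n::finite \<Rightarrow> real" and n :: nat and \<alpha> :: "'n \<Rightarrow> int"
  assumes C: "C2 f" and M: "\<forall>x\<in>cube n \<alpha>. hess_frob f x \<le> M"
  shows "\<bar>norm (dhat n \<alpha> f) - 2 powr (- real n * real CARD('n)) * norm (grad f (xpt n \<alpha>))\<bar>
     \<le> real CARD('n)^2 * M * (2 powr - real n)^(CARD('n)+1)"
proof -
  define h where "h = (2::real) powr - real n"
  define s where "s = CARD('n)"
  define la where "la = h *\<^sub>R ivec \<alpha>"
  define Q where "Q = cube n \<alpha>"
  define c where "c = xpt n \<alpha>"
  have Qe: "Q = cbox la (la + h *\<^sub>R (\<chi> i. (1::real)))"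
    using cube_eq[of n \<alpha>] unfolding Q_def la_def h_def by simp
  have hpos: "h > 0" unfolding h_def by simp
  have hN: "h = 1/2^n" unfolding h_def by (rule h_eq)
  have h2: "2^n * h = 1" unfolding hN by simp
  have cQ: "c \<in> Q" unfolding Qe c_def xpt_def la_def mem_box_cart ivec_def
    using hpos by (simp add: algebra_simps h_def)
  have Mpos: "0 \<le> M" using M cQ hess_nonneg[of f c] unfolding Q_def by fastforce
  have hs: "2 powr (- real n * real s) = h^s"
  proof -
    have "h^s = h powr real s" using hpos by (simp add: powr_realpow)
    also have "\<dots> = 2 powr (- real n * real s)" unfolding h_def by (simp add: powr_powr)
    finally show ?thesis by simp
  qed
  note cf = C2D(1)[OF C]
  have cfs: "continuous_on UNIV (\<lambda>t. f (t + v))" for v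
    by (rule continuous_on_compose2[OF cf]) (auto intro!: continuous_intros)
  have pw: "2 powr (real n * (1 - real s / 2) + 2) * 2 powr (real n * real s / 2) = 4 * 2^n"
  proof -
    have "2 powr (real n * (1 - real s / 2) + 2) * 2 powr (real n * real s / 2)
        = (2::real) powr ((real n * (1 - real s / 2) + 2) + real n * real s / 2)"
      by (rule powr_add[symmetric])
    also have "(real n * (1 - real s / 2) + 2) + real n * real s / 2 = real (n + 2)"
      by (simp add: algebra_simps)
    also have "(2::real) powr real (n + 2) = 2^(n+2)" by (rule powr_realpow) simp
    finally show ?thesis by (simp add: power_add)
  qed
  have key: "\<bar>dhat n \<alpha> f $ j - h^s * partial j f c\<bar> \<le> real s * M * h^(s+1)" for j
  proof -
    define A where "A = cbox la (la + h *\<^sub>R (\<chi> i. if i = j then 1/2 else 1))"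
    define E where "E t = f t - f (t + (h/2) *\<^sub>R axis j 1) + (h/2) * partial j f c" for t
    have dj: "dhat n \<alpha> f $ j = - (4 * 2^n) * integral A (\<lambda>t. f t - f (t + (h/2) *\<^sub>R axis j 1))"
      unfolding dhat_def haar_coeff_def
      using haar_int[OF cf, where n=n and j=j and \<alpha>=\<alpha>] pw
      unfolding A_def la_def h_def s_def by (simp add: mult.assoc[symmetric])
    have AQ: "t + z *\<^sub>R axis j 1 \<in> Q" if tz: "t \<in> A" "0 \<le> z" "z \<le> h/2" for t z
    proof -
      have tt: "\<And>i. la$i \<le> t$i \<and> t$i \<le> la$i + h*(if i=j then 1/2 else 1)"
        using tz(1) unfolding A_def mem_box_cart by simp
      show ?thesis unfolding Qe mem_box_cart
      proof
        fix i
        show "la $ i \<le> (t + z *\<^sub>R axis j 1) $ i \<and> (t + z *\<^sub>R axis j 1) $ i \<le> (la + h *\<^sub>R (\<chi> i. (1::real))) $ i"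
          using tt[of i] tz hpos by (cases "i = j") (auto simp: axis_def)
      qed
    qed
    have Bd2: "\<forall>k. \<forall>y\<in>Q. \<bar>partial k (partial j f) y\<bar> \<le> M"
      using M second_le_hess[of _ j f] unfolding Q_def by (meson order_trans)
    have Ebd: "norm (E t) \<le> (h/2) * (M * (real s * h))" if t: "t \<in> A" for t
    proof -
      obtain z where z: "min 0 (h/2) \<le> z" "z \<le> max 0 (h/2)"
        "f (t + (h/2) *\<^sub>R axis j 1) - f t = (h/2) * partial j f (t + z *\<^sub>R axis j 1)"
        using coord_mvt[of f j "h/2" t] C2D(2)[OF C] by blast
      define \<xi> where "\<xi> = t + z *\<^sub>R axis j 1"
      have \<xi>Q: "\<xi> \<in> Q" unfolding \<xi>_def using AQ[OF t] z hpos by simp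
      have Et: "E t = (h/2) * (partial j f c - partial j f \<xi>)"
        unfolding E_def \<xi>_def using z(3) by (simp add: algebra_simps)
      have st: "\<bar>partial j f c - partial j f \<xi>\<bar> \<le> M * (\<Sum>k\<in>UNIV. \<bar>c$k - \<xi>$k\<bar>)"
        by (rule stair[OF C2D(4)[OF C] Bd2[unfolded Qe] \<xi>Q[unfolded Qe] cQ[unfolded Qe]])
      have "(\<Sum>k\<in>UNIV. \<bar>c$k - \<xi>$k\<bar>) \<le> of_nat (card (UNIV::'n set)) * h"
      proof (rule sum_bounded_above)
        fix k :: 'n
        have "la$k \<le> c$k \<and> c$k \<le> la$k + h" using cQ unfolding Qe mem_box_cart by simp
        moreover have "la$k \<le> \<xi>$k \<and> \<xi>$k \<le> la$k + h" using \<xi>Q unfolding Qe mem_box_cart by simp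
        ultimately show "\<bar>c$k - \<xi>$k\<bar> \<le> h" by linarith
      qed
      hence "\<bar>partial j f c - partial j f \<xi>\<bar> \<le> M * (real s * h)"
        using st Mpos unfolding s_def by (meson mult_left_mono order_trans)
      then show ?thesis unfolding Et using hpos by (simp add: abs_mult)
    qed
    have iE: "E integrable_on A" unfolding A_def E_def
      by (rule integrable_continuous)
        (auto intro!: continuous_intros continuous_on_subset[OF cf] continuous_on_subset[OF cfs])
    have bnd: "norm (integral A E) \<le> (h/2) * (M * (real s * h)) * measure lborel A"
      unfolding A_def by (rule has_integral_bound[OF _ integrable_integral[OF iE[unfolded A_def]]]) (use Ebd hpos Mpos in \<open>auto simp: A_def\<close>)
    have cA: "measure lborel A = h^s / 2"
    proof -
      have "la \<in> A" unfolding A_def mem_box_cart using hpos by simp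
      hence ne: "A \<noteq> {}" by blast
      have "measure lborel A = (\<Prod>i\<in>UNIV. h * (if i = j then 1/2 else 1))"
        using content_cbox_cart[OF ne[unfolded A_def]] unfolding A_def by simp
      also have "\<dots> = h^s * (\<Prod>i\<in>UNIV. (if i = j then 1/2 else 1))"
        by (simp add: prod.distrib s_def)
      also have "(\<Prod>i\<in>UNIV. (if i = j then 1/2 else (1::real))) = 1/2"
        by (subst prod.remove[of UNIV j]) auto
      finally show ?thesis by simp
    qed
    have iI: "integral A (\<lambda>t. f t - f (t + (h/2) *\<^sub>R axis j 1)) = integral A E - measure lborel A * ((h/2) * partial j f c)"
    proof -
      have "(\<lambda>t. f t - f (t + (h/2) *\<^sub>R axis j 1)) = (\<lambda>t. E t - (h/2) * partial j f c)"
        unfolding E_def by auto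
      moreover have "integral A (\<lambda>t. E t - (h/2) * partial j f c) = integral A E - integral A (\<lambda>t. (h/2) * partial j f c)"
        by (rule integral_diff[OF iE]) (simp add: A_def integrable_const)
      ultimately show ?thesis unfolding A_def by simp
    qed
    have "dhat n \<alpha> f $ j - h^s * partial j f c = - (4 * 2^n) * integral A E"
      unfolding dj iI cA using h2 by (simp add: algebra_simps power_Suc)
    hence "\<bar>dhat n \<alpha> f $ j - h^s * partial j f c\<bar> = 4 * 2^n * norm (integral A E)" by (simp add: abs_mult)
    also have "\<dots> \<le> 4 * 2^n * ((h/2) * (M * (real s * h)) * measure lborel A)"
      by (rule mult_left_mono[OF bnd]) simp
    also have "\<dots> = real s * M * h^(s+1) * (2^n * h)" unfolding cA by (simp add: algebra_simps power_Suc)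
    finally show ?thesis using h2 by simp
  qed
  have "norm (dhat n \<alpha> f - h^s *\<^sub>R grad f c) \<le> (\<Sum>j\<in>UNIV. \<bar>(dhat n \<alpha> f - h^s *\<^sub>R grad f c)$j\<bar>)"
    by (rule norm_le_l1_cart)
  also have "\<dots> \<le> (\<Sum>j\<in>(UNIV::'n set). real s * M * h^(s+1))"
    by (rule sum_mono) (use key in \<open>simp add: grad_def\<close>)
  also have "\<dots> = real s^2 * M * h^(s+1)" by (simp add: s_def power2_eq_square)
  finally have nb: "norm (dhat n \<alpha> f - h^s *\<^sub>R grad f c) \<le> real s^2 * M * h^(s+1)" .
  have "\<bar>norm (dhat n \<alpha> f) - h^s * norm (grad f c)\<bar> \<le> norm (dhat n \<alpha> f - h^s *\<^sub>R grad f c)"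
    using norm_triangle_ineq3[of "dhat n \<alpha> f" "h^s *\<^sub>R grad f c"] hpos by simp
  with nb have fin: "\<bar>norm (dhat n \<alpha> f) - h^s * norm (grad f c)\<bar> \<le> real s^2 * M * h^(s+1)" by linarith
  have hsN: "2 powr (- real n * real CARD('n)) = h^s" using hs unfolding s_def .
  show ?thesis unfolding hsN using fin unfolding c_def h_def s_def .
qed



lemma cube_mem: "x \<in> cube n \<alpha> \<longleftrightarrow> (\<forall>i. of_int (\<alpha> i) / 2^n \<le> x$i \<and> x$i \<le> (of_int (\<alpha> i) + 1) / 2^n)"
  unfolding cube_eq h_eq mem_box_cart ivec_def by (simp add: add_divide_distrib)

lemma pow2_split: "m \<le> n \<Longrightarrow> (2::real)^n = 2^m * 2^(n-m)"
  by (metis le_add_diff_inverse power_add)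

lemma cube_sub:
  assumes "m \<le> n" "\<forall>i. 0 \<le> r i \<and> r i < 2^(n-m)"
  shows "cube n (\<lambda>i. 2^(n-m) * \<beta> i + r i) \<subseteq> cube m \<beta>"
proof
  fix x assume x: "x \<in> cube n (\<lambda>i. 2^(n-m) * \<beta> i + r i)"
  show "x \<in> cube m \<beta>" unfolding cube_mem
  proof
    fix i
    define N where "N = (2::real)^(n-m)"
    have Npos: "N > 0" unfolding N_def by simp
    have ri0: "0 \<le> r i" "r i + 1 \<le> (2::int)^(n-m)" using assms(2)[rule_format, of i] by auto
    have "real_of_int (r i + 1) \<le> real_of_int ((2::int)^(n-m))" using ri0(2) by (simp only: of_int_le_iff)
    hence ri: "0 \<le> real_of_int (r i)" "real_of_int (r i) + 1 \<le> N"
      using ri0(1) unfolding N_def by simp_all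
    have xi: "(N * of_int (\<beta> i) + of_int (r i)) / 2^n \<le> x$i" "x$i \<le> (N * of_int (\<beta> i) + of_int (r i) + 1) / 2^n"
      using x[unfolded cube_mem, rule_format, of i] unfolding N_def by auto
    have e: "(2::real)^n = 2^m * N" unfolding N_def by (rule pow2_split[OF assms(1)])
    have "of_int (\<beta> i) / 2^m = (N * of_int (\<beta> i)) / 2^n" unfolding e using Npos by simp
    also have "\<dots> \<le> (N * of_int (\<beta> i) + of_int (r i)) / 2^n" using ri by (simp add: divide_right_mono)
    finally have 1: "of_int (\<beta> i) / 2^m \<le> x$i" using xi by linarith
    have "(N * of_int (\<beta> i) + of_int (r i) + 1) / 2^n \<le> (N * of_int (\<beta> i) + N) / 2^n"
      using ri by (simp add: divide_right_mono)
    also have "\<dots> = (of_int (\<beta> i) + 1) / 2^m" unfolding e using Npos by (simp add: field_simps)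
    finally have 2: "x$i \<le> (of_int (\<beta> i) + 1) / 2^m" using xi by linarith
    show "of_int (\<beta> i) / 2^m \<le> x$i \<and> x$i \<le> (of_int (\<beta> i) + 1) / 2^m" using 1 2 by simp
  qed
qed

lemma cube_cover:
  assumes "n \<le> m" "x \<in> cube n \<alpha>"
  shows "\<exists>r. (\<forall>i. 0 \<le> r i \<and> r i < 2^(m-n)) \<and> x \<in> cube m (\<lambda>i. 2^(m-n) * \<alpha> i + r i)"
proof -
  define N where "N = (2::int)^(m-n)"
  have Npos: "N \<ge> 1" unfolding N_def by simp
  have e: "(2::real)^m = 2^n * of_int N" unfolding N_def using pow2_split[OF assms(1)] by simp
  define y where "y i = 2^m * x$i - of_int N * of_int (\<alpha> i)" for i
  have y: "0 \<le> y i \<and> y i \<le> of_int N" for i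
  proof -
    have xi: "of_int (\<alpha> i) / 2^n \<le> x$i" "x$i \<le> (of_int (\<alpha> i) + 1) / 2^n"
      using assms(2)[unfolded cube_mem] by auto
    have "of_int (\<alpha> i) \<le> 2^n * x$i" "2^n * x$i \<le> of_int (\<alpha> i) + 1"
      using xi by (simp_all add: field_simps)
    hence "of_int N * of_int (\<alpha> i) \<le> of_int N * (2^n * x$i)" "of_int N * (2^n * x$i) \<le> of_int N * (of_int (\<alpha> i) + 1)"
      using Npos by (simp_all add: mult_left_mono)
    then show ?thesis unfolding y_def e by (simp add: algebra_simps)
  qed
  define r where "r i = min (N - 1) \<lfloor>y i\<rfloor>" for i
  have r: "0 \<le> r i \<and> r i < N \<and> of_int (r i) \<le> y i \<and> y i \<le> of_int (r i) + 1" for i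
  proof (cases "\<lfloor>y i\<rfloor> \<le> N - 1")
    case True
    then show ?thesis unfolding r_def using y[of i] by (auto simp: min_def) linarith+
  next
    case False
    hence "N \<le> \<lfloor>y i\<rfloor>" by linarith
    hence "of_int N \<le> (of_int \<lfloor>y i\<rfloor> :: real)" by simp
    hence "y i \<ge> of_int N" using of_int_floor_le[of "y i"] by linarith
    hence "y i = of_int N" using y[of i] by linarith
    then show ?thesis unfolding r_def using False Npos by (auto simp: min_def)
  qed
  have "x \<in> cube m (\<lambda>i. N * \<alpha> i + r i)" unfolding cube_mem
  proof
    fix i
    have "of_int (r i) \<le> y i" "y i \<le> of_int (r i) + 1" using r[of i] by auto
    then show "of_int (N * \<alpha> i + r i) / 2^m \<le> x$i \<and> x$i \<le> (of_int (N * \<alpha> i + r i) + 1) / 2^m"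
      unfolding y_def by (simp add: field_simps)
  qed
  then show ?thesis using r unfolding N_def by blast
qed



definition Sc :: "(real^'n::finite \<Rightarrow> real) \<Rightarrow> nat \<Rightarrow> ('n \<Rightarrow> int) \<Rightarrow> ennreal" where
  "Sc f n \<alpha> = (SUP x\<in>cube n \<alpha>. ennreal (hess_frob f x))"

definition Tt :: "(real^'n::finite \<Rightarrow> real) \<Rightarrow> nat \<Rightarrow> ennreal" where
  "Tt f n = (\<Sum>\<^sub>\<infinity>\<alpha>\<in>(UNIV :: ('n \<Rightarrow> int) set). Sc f n \<alpha>)"

lemma summ_enn: "(f::_ \<Rightarrow> ennreal) summable_on S"
  by (rule nonneg_summable_on_complete) simp

lemma infsum_enn_SUP: "infsum (f::_ \<Rightarrow> ennreal) A = (SUP F\<in>{F. finite F \<and> F\<subseteq>A}. sum f F)"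
  by (rule nonneg_infsum_complete) simp

lemma infsum_cmult_enn: "infsum (\<lambda>x. c * f x) A = (c::ennreal) * infsum f A"
  unfolding infsum_enn_SUP SUP_mult_left_ennreal by (simp add: sum_distrib_left)

lemma infsum_sum_enn:
  fixes g :: "'i \<Rightarrow> 'a \<Rightarrow> ennreal"
  assumes "finite I"
  shows "infsum (\<lambda>x. \<Sum>i\<in>I. g i x) A = (\<Sum>i\<in>I. infsum (g i) A)"
  using assms
proof (induction I rule: finite_induct)
  case empty
  then show ?case by simp
next
  case (insert i I)
  have "infsum (\<lambda>x. \<Sum>i\<in>insert i I. g i x) A = infsum (\<lambda>x. g i x + (\<Sum>i\<in>I. g i x)) A"
    using insert by simp
  also have "\<dots> = infsum (g i) A + infsum (\<lambda>x. \<Sum>i\<in>I. g i x) A"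
    by (rule infsum_add) (rule summ_enn)+
  finally show ?case using insert by simp
qed

lemma infsum_mono_enn: "(\<And>x. x \<in> A \<Longrightarrow> f x \<le> g x) \<Longrightarrow> infsum f A \<le> (infsum g A :: ennreal)"
  by (rule infsum_mono) (rule summ_enn)+

lemma Hn_eq:
  fixes f :: "real^'n::finite \<Rightarrow> real"
  shows "Hn n f = ennreal (2 powr (- real n * real CARD('n))) * Tt f n"
  unfolding Hn_def Tt_def Sc_def by (rule infsum_cmult_enn)

lemma reindex:
  fixes g :: "('n::finite \<Rightarrow> int) \<Rightarrow> ennreal" and N :: int
  assumes N: "N \<ge> 1"
  shows "infsum g UNIV = infsum (\<lambda>\<beta>. \<Sum>r\<in>(PiE (UNIV::'n set) (\<lambda>_. {0..<N})). g (\<lambda>i. N * \<beta> i + r i)) UNIV"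
proof -
  define R where "R = PiE (UNIV::'n set) (\<lambda>_. {0..<N})"
  have Rm: "r \<in> R \<longleftrightarrow> (\<forall>i. 0 \<le> r i \<and> r i < N)" for r
    unfolding R_def by (simp add: PiE_UNIV_domain Pi_iff)
  have fR: "finite R" unfolding R_def by (rule finite_PiE) simp_all
  define \<phi> where "\<phi> r \<beta> = (\<lambda>i. N * \<beta> i + r i)" for r \<beta> :: "'n \<Rightarrow> int"
  have U: "(UNIV :: ('n \<Rightarrow> int) set) = (\<Union>r\<in>R. range (\<phi> r))"
  proof (rule set_eqI, rule iffI)
    fix \<alpha> :: "'n \<Rightarrow> int"
    have "\<alpha> = \<phi> (\<lambda>i. \<alpha> i mod N) (\<lambda>i. \<alpha> i div N)" unfolding \<phi>_def by simp
    moreover have "(\<lambda>i. \<alpha> i mod N) \<in> R" using N by (simp add: Rm)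
    ultimately show "\<alpha> \<in> (\<Union>r\<in>R. range (\<phi> r))" by blast
  qed simp
  have modeq: "(N * \<beta> i + r i) mod N = r i" if "r \<in> R" for r \<beta> i
    using that N by (simp add: Rm)
  have disj: "range (\<phi> r) \<inter> range (\<phi> r') = {}" if "r \<in> R" "r' \<in> R" "r \<noteq> r'" for r r'
  proof (rule ccontr)
    assume "range (\<phi> r) \<inter> range (\<phi> r') \<noteq> {}"
    then obtain \<beta> \<beta>' where e: "\<phi> r \<beta> = \<phi> r' \<beta>'" by blast
    have "r i = r' i" for i
    proof -
      have "(N * \<beta> i + r i) = (N * \<beta>' i + r' i)" using fun_cong[OF e, of i] unfolding \<phi>_def by simp
      hence "(N * \<beta> i + r i) mod N = (N * \<beta>' i + r' i) mod N" by simp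
      thus ?thesis using modeq[OF that(1)] modeq[OF that(2)] by simp
    qed
    thus False using that(3) by auto
  qed
  have inj: "inj (\<phi> r)" for r
  proof (rule injI)
    fix \<beta> \<beta>' assume e: "\<phi> r \<beta> = \<phi> r \<beta>'"
    have "N * \<beta> i = N * \<beta>' i" for i using fun_cong[OF e, of i] unfolding \<phi>_def by simp
    thus "\<beta> = \<beta>'" using N by auto
  qed
  have "infsum g UNIV = infsum g (\<Union>r\<in>R. range (\<phi> r))" by (rule arg_cong[OF U])
  also have "\<dots> = (\<Sum>r\<in>R. infsum g (range (\<phi> r)))"
    by (rule sum_infsum[symmetric, OF fR summ_enn disj]) auto
  also have "\<dots> = (\<Sum>r\<in>R. infsum (\<lambda>\<beta>. g (\<phi> r \<beta>)) UNIV)"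
    by (rule sum.cong) (simp_all add: infsum_reindex[OF inj] comp_def)
  also have "\<dots> = infsum (\<lambda>\<beta>. \<Sum>r\<in>R. g (\<phi> r \<beta>)) UNIV"
    by (rule infsum_sum_enn[symmetric, OF fR])
  finally show ?thesis unfolding R_def \<phi>_def .
qed

lemma T_le1:
  fixes f :: "real^'n::finite \<Rightarrow> real"
  assumes "m \<le> n"
  shows "Tt f n \<le> of_nat ((2^(n-m))^CARD('n)) * Tt f m"
proof -
  define N where "N = (2::int)^(n-m)"
  define R where "R = PiE (UNIV::'n set) (\<lambda>_. {0..<N})"
  have N1: "N \<ge> 1" unfolding N_def by simp
  have Rm: "r \<in> R \<longleftrightarrow> (\<forall>i. 0 \<le> r i \<and> r i < N)" for r
    unfolding R_def by (simp add: PiE_UNIV_domain Pi_iff)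
  have cR: "card R = (2^(n-m))^CARD('n)"
  proof -
    have "card R = (\<Prod>i\<in>(UNIV::'n set). card {0..<N})" unfolding R_def by (rule card_PiE) simp
    also have "\<dots> = (nat N)^CARD('n)" by simp
    also have "nat N = 2^(n-m)" unfolding N_def by (simp add: nat_power_eq)
    finally show ?thesis .
  qed
  have "Tt f n = infsum (\<lambda>\<beta>. \<Sum>r\<in>R. Sc f n (\<lambda>i. N * \<beta> i + r i)) UNIV"
    unfolding Tt_def R_def by (rule reindex[OF N1])
  also have "\<dots> \<le> infsum (\<lambda>\<beta>. \<Sum>r\<in>R. Sc f m \<beta>) UNIV"
  proof (rule infsum_mono_enn, rule sum_mono)
    fix \<beta> r assume "r \<in> R"
    hence "cube n (\<lambda>i. N * \<beta> i + r i) \<subseteq> cube m \<beta>"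
      using cube_sub[OF assms, of r \<beta>] Rm unfolding N_def by simp
    then show "Sc f n (\<lambda>i. N * \<beta> i + r i) \<le> Sc f m \<beta>" unfolding Sc_def by (rule SUP_subset_mono) simp
  qed
  also have "\<dots> = infsum (\<lambda>\<beta>. of_nat (card R) * Sc f m \<beta>) UNIV" by simp
  also have "\<dots> = of_nat (card R) * Tt f m" unfolding Tt_def by (rule infsum_cmult_enn)
  finally show ?thesis unfolding cR .
qed

lemma T_le2:
  fixes f :: "real^'n::finite \<Rightarrow> real"
  assumes "n \<le> m"
  shows "Tt f n \<le> Tt f m"
proof -
  define N where "N = (2::int)^(m-n)"
  define R where "R = PiE (UNIV::'n set) (\<lambda>_. {0..<N})"
  have N1: "N \<ge> 1" unfolding N_def by simp
  have Rm: "r \<in> R \<longleftrightarrow> (\<forall>i. 0 \<le> r i \<and> r i < N)" for r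
    unfolding R_def by (simp add: PiE_UNIV_domain Pi_iff)
  have fR: "finite R" unfolding R_def by (rule finite_PiE) simp_all
  have "Tt f n \<le> infsum (\<lambda>\<alpha>. \<Sum>r\<in>R. Sc f m (\<lambda>i. N * \<alpha> i + r i)) UNIV"
    unfolding Tt_def
  proof (rule infsum_mono_enn)
    fix \<alpha> :: "'n \<Rightarrow> int"
    show "Sc f n \<alpha> \<le> (\<Sum>r\<in>R. Sc f m (\<lambda>i. N * \<alpha> i + r i))"
      unfolding Sc_def[of f n]
    proof (rule SUP_least)
      fix x assume "x \<in> cube n \<alpha>"
      then obtain r where r: "\<forall>i. 0 \<le> r i \<and> r i < N" "x \<in> cube m (\<lambda>i. N * \<alpha> i + r i)"
        using cube_cover[OF assms] unfolding N_def by blast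
      have "ennreal (hess_frob f x) \<le> Sc f m (\<lambda>i. N * \<alpha> i + r i)"
        unfolding Sc_def using r(2) by (rule SUP_upper)
      also have "\<dots> \<le> (\<Sum>r\<in>R. Sc f m (\<lambda>i. N * \<alpha> i + r i))"
        by (rule member_le_sum) (use r(1) Rm fR in auto)
      finally show "ennreal (hess_frob f x) \<le> (\<Sum>r\<in>R. Sc f m (\<lambda>i. N * \<alpha> i + r i))" .
    qed
  qed
  also have "\<dots> = Tt f m" unfolding Tt_def R_def by (rule reindex[OF N1, symmetric])
  finally show ?thesis .
qed

lemma cube_err_enn:
  fixes f :: "real^'n::finite \<Rightarrow> real"
  assumes C: "C2 f"
  shows "ennreal \<bar>norm (dhat n \<alpha> f) - 2 powr (- real n * real CARD('n)) * norm (grad f (xpt n \<alpha>))\<bar>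
     \<le> ennreal (real CARD('n)^2 * (2 powr - real n)^(CARD('n)+1)) * Sc f n \<alpha>"
proof (cases "Sc f n \<alpha>" rule: ennreal_cases)
  case (real r)
  have M: "\<forall>x\<in>cube n \<alpha>. hess_frob f x \<le> r"
  proof
    fix x assume "x \<in> cube n \<alpha>"
    hence "ennreal (hess_frob f x) \<le> Sc f n \<alpha>" unfolding Sc_def by (rule SUP_upper)
    then show "hess_frob f x \<le> r" using real by simp
  qed
  have "\<bar>norm (dhat n \<alpha> f) - 2 powr (- real n * real CARD('n)) * norm (grad f (xpt n \<alpha>))\<bar>
     \<le> real CARD('n)^2 * r * (2 powr - real n)^(CARD('n)+1)" by (rule cube_err[OF C M])
  hence "ennreal \<bar>norm (dhat n \<alpha> f) - 2 powr (- real n * real CARD('n)) * norm (grad f (xpt n \<alpha>))\<bar>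
     \<le> ennreal (real CARD('n)^2 * (2 powr - real n)^(CARD('n)+1) * r)" by (intro ennreal_leI) (simp add: algebra_simps)
  also have "\<dots> = ennreal (real CARD('n)^2 * (2 powr - real n)^(CARD('n)+1)) * Sc f n \<alpha>"
    using real by (simp add: ennreal_mult'')
  finally show ?thesis .
next
  case top
  have "real CARD('n)^2 * (2 powr - real n)^(CARD('n)+1) > 0" by simp
  then show ?thesis using top by (simp add: ennreal_mult_top)
qed

lemma lhs_le:
  fixes f :: "real^'n::finite \<Rightarrow> real"
  assumes C: "C2 f"
  shows "(\<Sum>\<^sub>\<infinity>\<alpha>\<in>(UNIV :: ('n \<Rightarrow> int) set).
        ennreal \<bar>norm (dhat n \<alpha> f) - 2 powr (- real n * real CARD('n)) * norm (grad f (xpt n \<alpha>))\<bar>)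
     \<le> ennreal (real CARD('n)^2 * (2 powr - real n)^(CARD('n)+1)) * Tt f n"
proof -
  have "(\<Sum>\<^sub>\<infinity>\<alpha>\<in>(UNIV :: ('n \<Rightarrow> int) set).
        ennreal \<bar>norm (dhat n \<alpha> f) - 2 powr (- real n * real CARD('n)) * norm (grad f (xpt n \<alpha>))\<bar>)
     \<le> (\<Sum>\<^sub>\<infinity>\<alpha>\<in>(UNIV :: ('n \<Rightarrow> int) set). ennreal (real CARD('n)^2 * (2 powr - real n)^(CARD('n)+1)) * Sc f n \<alpha>)"
    by (rule infsum_mono_enn) (rule cube_err_enn[OF C])
  also have "\<dots> = ennreal (real CARD('n)^2 * (2 powr - real n)^(CARD('n)+1)) * Tt f n"
    unfolding Tt_def by (rule infsum_cmult_enn)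
  finally show ?thesis .
qed



lemma uniform_bound:
  fixes f :: "real^'n::finite \<Rightarrow> real"
  assumes C: "C2 f"
  shows "(\<Sum>\<^sub>\<infinity>\<alpha>\<in>(UNIV :: ('n \<Rightarrow> int) set).
        ennreal \<bar>norm (dhat n \<alpha> f) - 2 powr (- real n * real CARD('n)) * norm (grad f (xpt n \<alpha>))\<bar>)
     \<le> ennreal (real CARD('n)^2 * 2 powr - real n) * Tt f m"
proof -
  define h where "h = (2::real) powr - real n"
  define K where "K = real CARD('n)^2"
  have hpos: "h > 0" unfolding h_def by simp
  have hN: "h = 1/2^n" unfolding h_def by (rule h_eq)
  have h1: "h \<le> 1" unfolding hN by simp
  have Kpos: "K \<ge> 0" unfolding K_def by simp
  have L: "(\<Sum>\<^sub>\<infinity>\<alpha>\<in>(UNIV :: ('n \<Rightarrow> int) set).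
        ennreal \<bar>norm (dhat n \<alpha> f) - 2 powr (- real n * real CARD('n)) * norm (grad f (xpt n \<alpha>))\<bar>)
     \<le> ennreal (K * h^(CARD('n)+1)) * Tt f n" unfolding K_def h_def by (rule lhs_le[OF C])
  show ?thesis
  proof (cases "m \<le> n")
    case True
    define P where "P = ((2::nat)^(n-m))^CARD('n)"
    have "ennreal (K * h^(CARD('n)+1)) * Tt f n \<le> ennreal (K * h^(CARD('n)+1)) * (of_nat P * Tt f m)"
      unfolding P_def by (rule mult_left_mono[OF T_le1[OF True]]) simp
    also have "\<dots> = ennreal (K * h^(CARD('n)+1) * real P) * Tt f m"
      using Kpos hpos by (simp add: ennreal_mult ennreal_of_nat_eq_real_of_nat mult.assoc)
    also have "\<dots> \<le> ennreal (K * h) * Tt f m"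
    proof (rule mult_right_mono[OF ennreal_leI])
      have "h * 2^(n-m) \<le> 1"
      proof -
        have "(2::real)^(n-m) \<le> 2^n" by (rule power_increasing) simp_all
        thus ?thesis unfolding hN by simp
      qed
      hence "(h * 2^(n-m))^CARD('n) \<le> 1" using hpos by (intro power_le_one) simp_all
      hence "h^CARD('n) * real P \<le> 1" unfolding P_def by (simp add: power_mult_distrib)
      hence "K * h * (h^CARD('n) * real P) \<le> K * h * 1"
        using Kpos hpos by (intro mult_left_mono) simp_all
      thus "K * h^(CARD('n)+1) * real P \<le> K * h" by (simp add: algebra_simps)
    qed simp
    finally show ?thesis using L unfolding K_def h_def by simp
  next
    case False
    have "ennreal (K * h^(CARD('n)+1)) * Tt f n \<le> ennreal (K * h^(CARD('n)+1)) * Tt f m"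
      using False by (intro mult_left_mono T_le2) simp_all
    also have "\<dots> \<le> ennreal (K * h) * Tt f m"
    proof (rule mult_right_mono[OF ennreal_leI])
      have "h^CARD('n) \<le> 1" using hpos h1 by (intro power_le_one) simp_all
      hence "K * h * h^CARD('n) \<le> K * h * 1"
        using Kpos hpos by (intro mult_left_mono) simp_all
      thus "K * h^(CARD('n)+1) \<le> K * h" by (simp add: algebra_simps)
    qed simp
    finally show ?thesis using L unfolding K_def h_def by simp
  qed
qed

lemma hess_cont:
  assumes "C2 f"
  shows "continuous_on UNIV (hess_frob f)"
  unfolding hess_frob_def[abs_def]
  by (intro continuous_intros C2D(5)[OF assms])

lemma zero_integral_cont:
  fixes g :: "'a::euclidean_space \<Rightarrow> real"
  assumes cg: "continuous_on UNIV g" and nn: "\<And>x. 0 \<le> g x"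
    and I0: "(\<integral>\<^sup>+ x. ennreal (g x) \<partial>lborel) = 0"
  shows "g x = 0"
proof (rule ccontr)
  assume "g x \<noteq> 0"
  hence gx: "g x > 0" using nn[of x] by simp
  obtain d where d: "d > 0" "\<forall>x'\<in>UNIV. dist x' x < d \<longrightarrow> dist (g x') (g x) < g x / 2"
    using cg[unfolded continuous_on_iff] gx by (meson UNIV_I half_gt_zero)
  have bl: "g x / 2 \<le> g y" if "y \<in> ball x d" for y
  proof -
    have "dist y x < d" using that by (simp add: dist_commute)
    hence "dist (g y) (g x) < g x / 2" using d(2) by blast
    hence "\<bar>g y - g x\<bar> < g x / 2" by (simp add: dist_real_def)
    thus ?thesis by linarith
  qed
  have le: "(\<integral>\<^sup>+ y. ennreal (g x / 2) * indicator (ball x d) y \<partial>lborel) \<le> (\<integral>\<^sup>+ y. ennreal (g y) \<partial>lborel)"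
    by (rule nn_integral_mono) (auto simp: indicator_def intro!: ennreal_leI bl)
  have e1: "(\<integral>\<^sup>+ y. ennreal (g x / 2) * indicator (ball x d) y \<partial>lborel) = ennreal (g x / 2) * emeasure lborel (ball x d)"
    by (rule nn_integral_cmult_indicator) simp
  have e2: "emeasure lborel (ball x d) = ennreal (measure lborel (ball x d))"
    using emeasure_lborel_ball_finite[of x d] by (intro emeasure_eq_ennreal_measure) simp
  have mp: "measure lborel (ball x d) > 0" using content_ball_pos[OF d(1)] by simp
  have "0 < g x / 2 * measure lborel (ball x d)" using gx mp by simp
  hence "0 < ennreal (g x / 2 * measure lborel (ball x d))" by simp
  also have "\<dots> = ennreal (g x / 2) * emeasure lborel (ball x d)"
    unfolding e2 by (rule ennreal_mult[OF _ measure_nonneg]) (use gx in simp)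
  also have "\<dots> \<le> (\<integral>\<^sup>+ y. ennreal (g y) \<partial>lborel)" using le e1 by simp
  finally have "0 < (\<integral>\<^sup>+ y. ennreal (g y) \<partial>lborel)" .
  thus False using I0 by simp
qed

theorem lemma4p3:
  fixes f :: "real^'n::finite \<Rightarrow> real"
  assumes "C2 f"
    and "\<exists>n. Hn n f < \<infinity>"
  shows "\<forall>n0::nat. \<exists>C>0. \<forall>n\<ge>n0.
    (\<Sum>\<^sub>\<infinity>\<alpha>\<in>(UNIV :: ('n \<Rightarrow> int) set).
        ennreal \<bar>norm (dhat n \<alpha> f) - 2 powr (- real n * real CARD('n)) * norm (grad f (xpt n \<alpha>))\<bar>)
    \<le> ennreal (2 powr (- real n) * C) * (\<integral>\<^sup>+ x. ennreal (hess_frob f x) \<partial>lborel)"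
proof
  fix n0 :: nat
  define K where "K = real CARD('n)^2"
  have Kpos: "K > 0" unfolding K_def by simp
  obtain m where Hm: "Hn m f < \<infinity>" using assms(2) by blast
  have "Tt f m \<noteq> top"
  proof
    assume "Tt f m = top"
    hence "Hn m f = top" unfolding Hn_eq by simp
    thus False using Hm by simp
  qed
  then obtain \<tau> where tau: "0 \<le> \<tau>" "Tt f m = ennreal \<tau>" by (cases "Tt f m") auto
  define I where "I = (\<integral>\<^sup>+ x. ennreal (hess_frob f x) \<partial>lborel)"
  have UB: "\<And>n. (\<Sum>\<^sub>\<infinity>\<alpha>\<in>(UNIV :: ('n \<Rightarrow> int) set).
        ennreal \<bar>norm (dhat n \<alpha> f) - 2 powr (- real n * real CARD('n)) * norm (grad f (xpt n \<alpha>))\<bar>)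
     \<le> ennreal (K * 2 powr - real n) * ennreal \<tau>"
    using uniform_bound[OF assms(1), of _ m] tau unfolding K_def by simp
  show "\<exists>C>0. \<forall>n\<ge>n0.
    (\<Sum>\<^sub>\<infinity>\<alpha>\<in>(UNIV :: ('n \<Rightarrow> int) set).
        ennreal \<bar>norm (dhat n \<alpha> f) - 2 powr (- real n * real CARD('n)) * norm (grad f (xpt n \<alpha>))\<bar>)
    \<le> ennreal (2 powr (- real n) * C) * (\<integral>\<^sup>+ x. ennreal (hess_frob f x) \<partial>lborel)"
  proof (cases I rule: ennreal_cases)
    case top
    show ?thesis
    proof (intro exI[of _ 1] conjI allI impI)
      fix n :: nat
      have "ennreal (2 powr (- real n) * 1) * I = top" using top by (simp add: ennreal_mult_top)
      thus "(\<Sum>\<^sub>\<infinity>\<alpha>\<in>(UNIV :: ('n \<Rightarrow> int) set).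
        ennreal \<bar>norm (dhat n \<alpha> f) - 2 powr (- real n * real CARD('n)) * norm (grad f (xpt n \<alpha>))\<bar>)
        \<le> ennreal (2 powr (- real n) * 1) * (\<integral>\<^sup>+ x. ennreal (hess_frob f x) \<partial>lborel)"
        unfolding I_def by simp
    qed simp
  next
    case (real i)
    show ?thesis
    proof (cases "i = 0")
      case True
      have hz: "hess_frob f x = 0" for x
        by (rule zero_integral_cont[OF hess_cont[OF assms(1)] hess_nonneg]) (use real True I_def in simp)
      have "Sc f m \<alpha> = 0" for \<alpha> unfolding Sc_def hz by (simp add: SUP_constant bot_ennreal)
      hence "Sc f m = (\<lambda>_. 0)" by (simp add: fun_eq_iff)
      hence "Tt f m = 0" unfolding Tt_def by simp
      hence "\<tau> = 0" using tau by simp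
      show ?thesis
      proof (intro exI[of _ 1] conjI allI impI)
        fix n :: nat
        show "(\<Sum>\<^sub>\<infinity>\<alpha>\<in>(UNIV :: ('n \<Rightarrow> int) set).
          ennreal \<bar>norm (dhat n \<alpha> f) - 2 powr (- real n * real CARD('n)) * norm (grad f (xpt n \<alpha>))\<bar>)
          \<le> ennreal (2 powr (- real n) * 1) * (\<integral>\<^sup>+ x. ennreal (hess_frob f x) \<partial>lborel)"
          using UB[of n] \<open>\<tau> = 0\<close> by (simp add: order_trans)
      qed simp
    next
      case False
      hence ipos: "i > 0" using real by simp
      define C where "C = K * \<tau> / i + 1"
      have Cpos: "C > 0" unfolding C_def using Kpos tau ipos by (simp add: add_nonneg_pos)
      show ?thesis
      proof (intro exI[of _ C] conjI allI impI)
        fix n :: nat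
        define h where "h = (2::real) powr - real n"
        have hpos: "h > 0" unfolding h_def by simp
        have "ennreal (K * h) * ennreal \<tau> = ennreal (K * h * \<tau>)"
          using Kpos hpos tau by (simp add: ennreal_mult)
        also have "\<dots> \<le> ennreal (h * C * i)"
        proof (rule ennreal_leI)
          have "h * C * i = h * (K * \<tau> + i)" unfolding C_def using ipos by (simp add: field_simps)
          also have "\<dots> \<ge> K * h * \<tau>" using hpos ipos by (simp add: algebra_simps)
          finally show "K * h * \<tau> \<le> h * C * i" .
        qed
        also have "\<dots> = ennreal (h * C) * I"
          using real hpos Cpos by (simp add: ennreal_mult)
        finally show "(\<Sum>\<^sub>\<infinity>\<alpha>\<in>(UNIV :: ('n \<Rightarrow> int) set).
          ennreal \<bar>norm (dhat n \<alpha> f) - 2 powr (- real n * real CARD('n)) * norm (grad f (xpt n \<alpha>))\<bar>)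
          \<le> ennreal (2 powr (- real n) * C) * (\<integral>\<^sup>+ x. ennreal (hess_frob f x) \<partial>lborel)"
          using UB[of n] unfolding I_def h_def by (meson order_trans)
      qed (rule Cpos)
    qed
  qed
qed

end
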